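(* Let $S$ be a monoid in which the unique maximal right ideal $\mathfrak{M}$ is two-sided. Let $A$ be a right $S$-act and $B$ a maximal subact of $A$ such that there exists $a\in A\setminus B$ with $\mathfrak{M}=\{s\in S\mid as\in B\}$. Then for every proper right ideal $I$ of $S$ we have $AI\neq A$.
   Context: $S$ is a monoid with identity $1$ having at least one right non-invertible element. A (right) $S$-act is a nonempty set $A$ with an action $(a,s)\mapsto as$ satisfying $a1=a$, $a(st)=(as)t$. A subact is a nonempty subset closed under the action; a maximal subact is a proper subact not properly contained in another proper subact. $\mathfrak{M}=\{s\in S\mid st\neq1\ \forall t\in S\}$ is the unique maximal right ideal of $S$, containing every proper right ideal. For a right ideal $I$, $AI=\{as\mid a\in A, s\in I\}$. *)

theory Defs
  imports Main
begin

text \<open>The monoid S is the type 'a (class monoid_mult). A right S-act is a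
nonempty carrier set A with an action act :: 'b => 'a => 'b.\<close>

definition is_act :: "'b set \<Rightarrow> ('b \<Rightarrow> 'a::monoid_mult \<Rightarrow> 'b) \<Rightarrow> bool" where
  "is_act A act \<longleftrightarrow> A \<noteq> {} \<and> (\<forall>a\<in>A. \<forall>s. act a s \<in> A)
     \<and> (\<forall>a\<in>A. act a 1 = a) \<and> (\<forall>a\<in>A. \<forall>s t. act a (s * t) = act (act a s) t)"

definition is_subact :: "'b set \<Rightarrow> ('b \<Rightarrow> 'a::monoid_mult \<Rightarrow> 'b) \<Rightarrow> 'b set \<Rightarrow> bool" where
  "is_subact A act B \<longleftrightarrow> B \<noteq> {} \<and> B \<subseteq> A \<and> (\<forall>b\<in>B. \<forall>s. act b s \<in> B)"

definition is_maximal_subact :: "'b set \<Rightarrow> ('b \<Rightarrow> 'a::monoid_mult \<Rightarrow> 'b) \<Rightarrow> 'b set \<Rightarrow> bool" where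
  "is_maximal_subact A act B \<longleftrightarrow> is_subact A act B \<and> B \<noteq> A \<and>
     (\<forall>C. is_subact A act C \<and> C \<noteq> A \<and> B \<subseteq> C \<longrightarrow> C = B)"

definition right_ideal :: "'a::monoid_mult set \<Rightarrow> bool" where
  "right_ideal I \<longleftrightarrow> I \<noteq> {} \<and> (\<forall>s\<in>I. \<forall>t. s * t \<in> I)"

definition left_ideal :: "'a::monoid_mult set \<Rightarrow> bool" where
  "left_ideal I \<longleftrightarrow> I \<noteq> {} \<and> (\<forall>s\<in>I. \<forall>t. t * s \<in> I)"

definition max_right_ideal :: "'a::monoid_mult set" where
  "max_right_ideal = {s. \<forall>t. s * t \<noteq> 1}"

definition act_set :: "'b set \<Rightarrow> ('b \<Rightarrow> 'a \<Rightarrow> 'b) \<Rightarrow> 'a set \<Rightarrow> 'b set" where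
  "act_set A act I = {act a s | a s. a \<in> A \<and> s \<in> I}"

end

theory Submission
  imports Defs
begin

theorem theorem2p4:
  fixes A :: "'b set" and act :: "'b \<Rightarrow> 'a::monoid_mult \<Rightarrow> 'b" and B :: "'b set"
  assumes nonunit: "\<exists>s::'a. \<forall>t. s * t \<noteq> 1"
    and twosided: "left_ideal (max_right_ideal :: 'a set)"
    and act: "is_act A act"
    and maxB: "is_maximal_subact A act B"
    and a: "\<exists>a\<in>A - B. (max_right_ideal :: 'a set) = {s. act a s \<in> B}"
  shows "\<forall>I::'a set. right_ideal I \<and> I \<noteq> UNIV \<longrightarrow> act_set A act I \<noteq> A"
proof (intro allI impI)
  fix I :: "'a set"
  assume I: "right_ideal I \<and> I \<noteq> UNIV"
  obtain a where aA: "a \<in> A" and aB: "a \<notin> B" and M: "(max_right_ideal :: 'a set) = {s. act a s \<in> B}"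
    using a by blast
  have IM: "I \<subseteq> max_right_ideal"
  proof
    fix s assume s: "s \<in> I"
    show "s \<in> max_right_ideal"
    proof (rule ccontr)
      assume "s \<notin> max_right_ideal"
      then obtain t where "s * t = 1" unfolding max_right_ideal_def by auto
      moreover have "\<forall>t. s * t \<in> I" using I s unfolding right_ideal_def by blast
      ultimately have "1 \<in> I" by metis
      moreover have "\<forall>x\<in>I. \<forall>t. x * t \<in> I" using I unfolding right_ideal_def by blast
      ultimately have "\<forall>u. u \<in> I" by (metis mult_1_left)
      then show False using I by auto
    qed
  qed
  have actA: "\<And>x s. x \<in> A \<Longrightarrow> act x s \<in> A" and a1: "act a 1 = a"
    and comp: "\<And>s t. act (act a s) t = act a (s * t)"
    using act aA unfolding is_act_def by simp_all
  have Bs: "B \<subseteq> A" "\<And>x s. x \<in> B \<Longrightarrow> act x s \<in> B"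
    using maxB unfolding is_maximal_subact_def is_subact_def by auto
  have sub: "is_subact A act (B \<union> {act a t | t. True})"
    unfolding is_subact_def
  proof (intro conjI ballI allI)
    show "B \<union> {act a t | t. True} \<noteq> {}" by blast
    show "B \<union> {act a t | t. True} \<subseteq> A" using Bs(1) actA aA by blast
  next
    fix x s assume "x \<in> B \<union> {act a t | t. True}"
    then show "act x s \<in> B \<union> {act a t | t. True}"
    proof
      assume "x \<in> B" then show ?thesis using Bs(2) by blast
    next
      assume "x \<in> {act a t | t. True}"
      then obtain t where "x = act a t" by blast
      then have "act x s = act a (t * s)" using comp by simp
      then show ?thesis by blast
    qed
  qed
  have a_in: "a \<in> B \<union> {act a t | t. True}" using a1 by (metis (mono_tags, lifting) CollectI UnI2)
  have eqA: "B \<union> {act a t | t. True} = A"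
  proof (rule ccontr)
    assume ne: "B \<union> {act a t | t. True} \<noteq> A"
    have "\<forall>C. is_subact A act C \<and> C \<noteq> A \<and> B \<subseteq> C \<longrightarrow> C = B"
      using maxB unfolding is_maximal_subact_def by blast
    then have "B \<union> {act a t | t. True} = B" using sub ne by blast
    then show False using \<open>a \<in> B \<union> {act a t | t. True}\<close> aB by blast
  qed
  show "act_set A act I \<noteq> A"
  proof
    assume "act_set A act I = A"
    then have "a \<in> act_set A act I" using aA by simp
    then obtain b s where b: "b \<in> A" and s: "s \<in> I" and abs: "a = act b s"
      unfolding act_set_def by blast
    have "b \<notin> B"
    proof
      assume "b \<in> B" then have "act b s \<in> B" using Bs(2) by blast
      then show False using abs aB by simp
    qed
    moreover have "b \<in> B \<union> {act a t | t. True}" using eqA b by simp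
    ultimately obtain u where u: "b = act a u" by blast
    have "u * s \<in> max_right_ideal" using twosided s IM unfolding left_ideal_def by auto
    then have "act a (u * s) \<in> B" using M by blast
    moreover have "act a (u * s) = a" using comp[of u s] abs u by (metis)
    ultimately show False using aB by simp
  qed
qed

end
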